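(* Let $n\geq 5$ and let $P=(Y,X,Z)$ be a path of length two in $AQ_n$ (so $Y\ne Z$ are both adjacent to $X$). Then $|N_{AQ_n}(P)|\geq 6n-17$ and $|N_{AQ_n}(X)\cap N_{AQ_n}(Y)\cap N_{AQ_n}(Z)|\leq 1$. Furthermore, if $Z=\overline{X}_n$, then $|N_{AQ_n}(P)|\geq 6n-15$.
   Context: The $n$-dimensional augmented cube $AQ_n$ has vertex set $\{0,1\}^n$, vertices written as strings $X=x_nx_{n-1}\cdots x_1$. For $1\le i\le n$ let $X_i=x_n\cdots x_{i+1}\bar x_i x_{i-1}\cdots x_1$ (flip bit $i$) and $\overline{X}_i=x_n\cdots x_{i+1}\bar x_i\bar x_{i-1}\cdots\bar x_1$ (flip bits $i,\dots,1$), where $\bar x=1-x$. Two distinct vertices $X,Y$ are adjacent iff $Y=X_i$ for some $1\le i\le n$ or $Y=\overline{X}_i$ for some $2\le i\le n$. $N_{AQ_n}(V)$ is the neighbor set of a vertex $V$; for a subgraph $T$, $N_{AQ_n}(T)=\bigcup_{U\in V(T)}N_{AQ_n}(U)\setminus V(T)$. *)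

theory Defs
  imports Main
begin

text \<open>A vertex X = x_n ... x_1 of AQ_n is a bit function on positions 1..n,
  represented as x :: nat \<Rightarrow> bool (True = 1) with x i = False for i outside 1..n.\<close>

definition AQ_verts :: "nat \<Rightarrow> (nat \<Rightarrow> bool) set" where
  "AQ_verts n = {x. \<forall>i. x i \<longrightarrow> 1 \<le> i \<and> i \<le> n}"

definition flip_bit :: "(nat \<Rightarrow> bool) \<Rightarrow> nat \<Rightarrow> (nat \<Rightarrow> bool)" where
  "flip_bit x i = x(i := \<not> x i)"

definition flip_upto :: "(nat \<Rightarrow> bool) \<Rightarrow> nat \<Rightarrow> (nat \<Rightarrow> bool)" where
  "flip_upto x i = (\<lambda>j. if 1 \<le> j \<and> j \<le> i then \<not> x j else x j)"

definition AQ_adj :: "nat \<Rightarrow> (nat \<Rightarrow> bool) \<Rightarrow> (nat \<Rightarrow> bool) \<Rightarrow> bool" where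
  "AQ_adj n x y \<longleftrightarrow> x \<in> AQ_verts n \<and> y \<in> AQ_verts n \<and> x \<noteq> y \<and>
     ((\<exists>i\<in>{1..n}. y = flip_bit x i) \<or> (\<exists>i\<in>{2..n}. y = flip_upto x i))"

definition AQ_nbr :: "nat \<Rightarrow> (nat \<Rightarrow> bool) \<Rightarrow> (nat \<Rightarrow> bool) set" where
  "AQ_nbr n v = {u. AQ_adj n v u}"

definition AQ_nbr_set :: "nat \<Rightarrow> (nat \<Rightarrow> bool) set \<Rightarrow> (nat \<Rightarrow> bool) set" where
  "AQ_nbr_set n S = (\<Union>u\<in>S. AQ_nbr n u) - S"

end

theory Submission
  imports Defs
begin


definition xr :: "(nat\<Rightarrow>bool) \<Rightarrow> (nat\<Rightarrow>bool) \<Rightarrow> (nat\<Rightarrow>bool)" where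
  "xr a b = (\<lambda>j. a j \<noteq> b j)"
definition ee :: "nat \<Rightarrow> nat \<Rightarrow> bool" where "ee k = (\<lambda>j. j = k)"
definition uu :: "nat \<Rightarrow> nat \<Rightarrow> bool" where "uu k = (\<lambda>j. 1 \<le> j \<and> j \<le> k)"
definition z0 :: "nat \<Rightarrow> bool" where "z0 = (\<lambda>j. False)"
definition SS :: "nat \<Rightarrow> (nat \<Rightarrow> bool) set" where "SS n = uu ` {1..n} \<union> ee ` {2..n}"

lemma xr_assoc: "xr (xr a b) c = xr a (xr b c)" by (auto simp: xr_def)
lemma xr_comm: "xr a b = xr b a" by (auto simp: xr_def)
lemma xr_lcomm: "xr a (xr b c) = xr b (xr a c)" by (auto simp: xr_def)
lemma xr_self[simp]: "xr a a = z0" by (auto simp: xr_def z0_def)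
lemma xr_z0[simp]: "xr a z0 = a" "xr z0 a = a" by (auto simp: xr_def z0_def)
lemma xr_cancel[simp]: "xr a (xr a b) = b" by (auto simp: xr_def)
lemma xr_cancel2[simp]: "xr (xr a b) b = a" by (auto simp: xr_def fun_eq_iff)
lemma xr_inj[simp]: "xr a b = xr a c \<longleftrightarrow> b = c" by (auto simp: xr_def fun_eq_iff)
lemma xr_eq_z0[simp]: "xr a b = z0 \<longleftrightarrow> a = b" by (auto simp: xr_def z0_def fun_eq_iff)
lemma xr_eq_self1[simp]: "xr a b = a \<longleftrightarrow> b = z0" by (auto simp: xr_def z0_def fun_eq_iff)
lemma xr_eq_self2[simp]: "xr a b = b \<longleftrightarrow> a = z0" by (auto simp: xr_def z0_def fun_eq_iff)

lemma ee_eq[simp]: "ee a = ee b \<longleftrightarrow> a = b" by (auto simp: ee_def fun_eq_iff)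
lemma uu_eq[simp]: "uu a = uu b \<longleftrightarrow> a = b"
proof
  assume h: "uu a = uu b"
  show "a = b"
  proof (rule ccontr)
    assume "a \<noteq> b"
    then have "a < b \<or> b < a" by arith
    then show False using fun_cong[OF h, of a] fun_cong[OF h, of b] by (auto simp: uu_def)
  qed
qed simp
lemma ee_uu[simp]: "ee a = uu b \<longleftrightarrow> a = 1 \<and> b = 1"
proof
  assume h: "ee a = uu b"
  show "a = 1 \<and> b = 1" using fun_cong[OF h, of a] fun_cong[OF h, of 1] fun_cong[OF h, of b]
    by (auto simp: uu_def ee_def)
qed (auto simp: uu_def ee_def fun_eq_iff)
lemma uu_ee[simp]: "uu b = ee a \<longleftrightarrow> a = 1 \<and> b = 1" using ee_uu by metis
lemma ee_z0[simp]: "ee a \<noteq> z0" "z0 \<noteq> ee a" by (auto simp: ee_def z0_def fun_eq_iff)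
lemma uu_z0[simp]: "uu a = z0 \<longleftrightarrow> a = 0" "z0 = uu a \<longleftrightarrow> a = 0"
  by (auto simp: uu_def z0_def fun_eq_iff)

lemma z0_notin[simp]: "z0 \<notin> SS n" by (auto simp: SS_def)

lemma SS_cases: "x \<in> SS n \<Longrightarrow> (\<exists>i. 1 \<le> i \<and> i \<le> n \<and> x = uu i) \<or> (\<exists>i. 2 \<le> i \<and> i \<le> n \<and> x = ee i)"
  by (auto simp: SS_def)
lemma uu_SS[simp]: "uu i \<in> SS n \<longleftrightarrow> 1 \<le> i \<and> i \<le> n" by (auto simp: SS_def)
lemma ee_SS[simp]: "ee i \<in> SS n \<longleftrightarrow> 1 \<le> i \<and> i \<le> n"
  by (auto simp: SS_def image_iff)
lemma finite_SS[simp]: "finite (SS n)" by (simp add: SS_def)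

lemma card_SS: "n \<ge> 1 \<Longrightarrow> card (SS n) = 2*n - 1"
proof -
  assume n: "n \<ge> 1"
  have d: "uu ` {1..n} \<inter> ee ` {2..n} = {}" by auto
  have "card (uu ` {1..n}) = n" by (subst card_image) (auto simp: inj_on_def)
  moreover have "card (ee ` {2..n}) = n - 1" by (subst card_image) (auto simp: inj_on_def)
  ultimately show ?thesis unfolding SS_def using card_Un_disjoint[OF _ _ d] n by simp
qed



lemma UUE: assumes h: "xr (uu i) (uu j) = ee k" and "1\<le>i" "1\<le>j"
  shows "(i+1 = j \<and> k = j) \<or> (j+1 = i \<and> k = i)"
proof -
  have h': "\<forall>m. ((1\<le>m \<and> m\<le>i) \<noteq> (1\<le>m \<and> m\<le>j)) = (m = k)"
    using h by (auto simp: xr_def uu_def ee_def fun_eq_iff)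
  show ?thesis using h'[rule_format, of i] h'[rule_format, of j] h'[rule_format, of k]
    h'[rule_format, of "i+1"] h'[rule_format, of "j+1"] assms(2-) by auto
qed

lemma EEE: assumes h: "xr (ee i) (ee j) = ee k" shows False
proof -
  have h': "\<forall>m. ((m=i) \<noteq> (m=j)) = (m = k)"
    using h by (auto simp: xr_def ee_def fun_eq_iff)
  show ?thesis using h'[rule_format, of i] h'[rule_format, of j] h'[rule_format, of k] by auto
qed

lemma UUEE0: assumes h: "xr (uu i) (uu j) = xr (ee k) (ee l)" and "1\<le>i" "i<j" "k \<noteq> l"
  shows "j = i+2 \<and> ((k=i+1 \<and> l=i+2) \<or> (k=i+2 \<and> l=i+1))"
proof -
  have h': "\<And>m. 1 \<le> m \<Longrightarrow> (i < m \<and> m \<le> j) = ((m = k) \<noteq> (m = l))"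
    using h assms(2,3) by (auto simp: xr_def uu_def ee_def fun_eq_iff dest!: spec)
  have k0: "k \<ge> 1" using h assms(4) by (auto simp: xr_def uu_def ee_def fun_eq_iff dest!: spec[of _ k])
  have l0: "l \<ge> 1" using h assms(4) by (auto simp: xr_def uu_def ee_def fun_eq_iff dest!: spec[of _ l])
  have 1: "i < k \<and> k \<le> j" using h'[of k] k0 assms(4) by auto
  have 2: "i < l \<and> l \<le> j" using h'[of l] l0 assms(4) by auto
  have 3: "i+1 = k \<or> i+1 = l" using h'[of "i+1"] assms(3) by auto
  have 4: "j = k \<or> j = l" using h'[of j] assms(2,3) by auto
  have 5: "i+2 \<le> j \<longrightarrow> (i+2 = k \<or> i+2 = l)" using h'[of "i+2"] by auto
  show ?thesis using 1 2 3 4 5 assms(4) by arith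
qed

lemma UUEE: assumes h: "xr (uu i) (uu j) = xr (ee k) (ee l)" and "1\<le>i" "1\<le>j" "k \<noteq> l"
  shows "(j = i+2 \<and> ((k=i+1 \<and> l=i+2) \<or> (k=i+2 \<and> l=i+1))) \<or> (i = j+2 \<and> ((k=j+1 \<and> l=j+2) \<or> (k=j+2 \<and> l=j+1)))"
proof -
  have "i \<noteq> j" using h assms(4) by (auto simp: xr_def ee_def fun_eq_iff dest!: spec[of _ k])
  then have "i < j \<or> j < i" by arith
  then show ?thesis
  proof
    assume "i < j" then show ?thesis using UUEE0[OF h assms(2) _ assms(4)] by auto
  next
    assume "j < i" then show ?thesis using UUEE0[OF h[unfolded xr_comm[of "uu i"]] assms(3) _ assms(4)] by auto
  qed
qed



lemma neq_le: "(i::nat) < j \<Longrightarrow> ((1\<le>m \<and> m \<le> i) \<noteq> (1\<le>m \<and> m \<le> j)) = (1 \<le> m \<and> i < m \<and> m \<le> j)" by auto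

lemma UUUU0: assumes h: "xr (uu i) (uu j) = xr (uu k) (uu l)" and "i<j" "k<l"
  shows "i = k"
proof -
  have h': "(i < m \<and> m \<le> j) = (k < m \<and> m \<le> l)" if m: "1 \<le> m" for m
  proof -
    have "xr (uu i) (uu j) m = xr (uu k) (uu l) m" using h by simp
    then have "((1\<le>m \<and> m\<le>i) \<noteq> (1\<le>m \<and> m\<le>j)) = ((1\<le>m \<and> m\<le>k) \<noteq> (1\<le>m \<and> m\<le>l))"
      by (simp add: xr_def uu_def)
    then show ?thesis using neq_le[OF assms(2), of m] neq_le[OF assms(3), of m] m by simp
  qed
  have "k \<le> i" using h'[of "i+1"] assms(2) by auto
  moreover have "i \<le> k" using h'[of "k+1"] assms(3) by auto
  ultimately show ?thesis by simp
qed



lemma UUUU: assumes h: "xr (uu i) (uu j) = xr (uu k) (uu l)"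
   and "i\<noteq>j" "i \<noteq> k" "i \<noteq> l" "j \<noteq> k" "j \<noteq> l" "k \<noteq> l"
  shows False
proof -
  have c1: "xr (uu j) (uu i) = xr (uu k) (uu l)" using h by (metis xr_comm)
  have c2: "xr (uu i) (uu j) = xr (uu l) (uu k)" using h by (metis xr_comm)
  have c3: "xr (uu j) (uu i) = xr (uu l) (uu k)" using h by (metis xr_comm)
  have "i < j \<or> j < i" using assms by arith
  moreover have "k < l \<or> l < k" using assms by arith
  ultimately show False
  proof (elim disjE)
    assume "i<j" "k<l" then show False using UUUU0[OF h] assms by blast
  next
    assume "i<j" "l<k" then show False using UUUU0[OF c2] assms by blast
  next
    assume "j<i" "k<l" then show False using UUUU0[OF c1] assms by blast
  next
    assume "j<i" "l<k" then show False using UUUU0[OF c3] assms by blast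
  qed
qed

lemma EEEE: assumes h: "xr (ee i) (ee j) = xr (ee k) (ee l)" and "i\<noteq>j" "i \<noteq> k" "i \<noteq> l"
  shows False
proof -
  have h': "\<forall>m. ((m=i) \<noteq> (m=j)) = ((m = k) \<noteq> (m = l))"
    using h by (auto simp: xr_def ee_def fun_eq_iff)
  show ?thesis using h'[rule_format, of i] assms(2-) by auto
qed



lemma uu1[simp]: "uu i 1 \<longleftrightarrow> 1 \<le> i" by (simp add: uu_def)
lemma ee1[simp]: "ee i 1 \<longleftrightarrow> i = 1" by (auto simp add: ee_def)
lemma uu1'[simp]: "uu i (Suc 0) \<longleftrightarrow> 1 \<le> i" by (simp add: uu_def)
lemma ee1'[simp]: "ee i (Suc 0) \<longleftrightarrow> i = 1" by (auto simp add: ee_def)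
lemma xr_app: "xr a b m = (a m \<noteq> b m)" by (simp add: xr_def)

lemma SS_T: "x \<in> SS n \<Longrightarrow> x 1 \<Longrightarrow> \<exists>i. 1 \<le> i \<and> i \<le> n \<and> x = uu i"
  by (auto simp: SS_def)
lemma SS_F: "x \<in> SS n \<Longrightarrow> \<not> x 1 \<Longrightarrow> \<exists>i. 2 \<le> i \<and> i \<le> n \<and> x = ee i"
  by (auto simp: SS_def)

definition T :: "nat \<Rightarrow> (nat \<Rightarrow> bool) set" where "T k = {uu (k-1), uu k, ee k}"

lemma tri_lemma:
  assumes a: "a \<in> SS n" and b: "b \<in> SS n" and ab: "a \<noteq> b" and c: "xr a b \<in> SS n"
  shows "\<exists>k. 2 \<le> k \<and> k \<le> n \<and> a \<in> T k \<and> b \<in> T k \<and> xr a b \<in> T k"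
proof (cases "a 1")
  case True
  then obtain i where i: "1 \<le> i" "i \<le> n" "a = uu i" using SS_T[OF a] by blast
  show ?thesis
  proof (cases "b 1")
    case True
    then obtain j where j: "1 \<le> j" "j \<le> n" "b = uu j" using SS_T[OF b] by blast
    have "\<not> xr a b 1" using i j by (simp add: xr_app)
    then obtain k where k: "2 \<le> k" "k \<le> n" "xr a b = ee k" using SS_F[OF c] by blast
    from UUE[of i j k] k(3) i j have "(i+1 = j \<and> k = j) \<or> (j+1 = i \<and> k = i)" by simp
    then show ?thesis using i j k by (auto simp: T_def)
  next
    case False
    then obtain j where j: "2 \<le> j" "j \<le> n" "b = ee j" using SS_F[OF b] by blast
    have "xr a b 1" using i j by (simp add: xr_app)
    then obtain k where k: "1 \<le> k" "k \<le> n" "xr a b = uu k" using SS_T[OF c] by blast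
    have "xr (uu i) (uu k) = ee j" using k(3) i(3) j(3) by (metis xr_cancel)
    from UUE[OF this i(1) k(1)] have "(i+1 = k \<and> j = k) \<or> (k+1 = i \<and> j = i)" .
    then show ?thesis using i j k by (auto simp: T_def)
  qed
next
  case False
  then obtain i where i: "2 \<le> i" "i \<le> n" "a = ee i" using SS_F[OF a] by blast
  show ?thesis
  proof (cases "b 1")
    case True
    then obtain j where j: "1 \<le> j" "j \<le> n" "b = uu j" using SS_T[OF b] by blast
    have "xr a b 1" using i j by (simp add: xr_app)
    then obtain k where k: "1 \<le> k" "k \<le> n" "xr a b = uu k" using SS_T[OF c] by blast
    have "xr (uu j) (uu k) = ee i" using k(3) i(3) j(3) by (metis xr_cancel xr_comm)
    from UUE[OF this j(1) k(1)] have "(j+1 = k \<and> i = k) \<or> (k+1 = j \<and> i = j)" .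
    then show ?thesis using i j k by (auto simp: T_def)
  next
    case False
    then obtain j where j: "2 \<le> j" "j \<le> n" "b = ee j" using SS_F[OF b] by blast
    have "\<not> xr a b 1" using i j by (simp add: xr_app)
    then obtain k where k: "2 \<le> k" "k \<le> n" "xr a b = ee k" using SS_F[OF c] by blast
    then show ?thesis using EEE[of i j k] i j by simp
  qed
qed

definition R :: "nat \<Rightarrow> (nat \<Rightarrow> bool) \<Rightarrow> (nat \<Rightarrow> bool) set" where
  "R n v = {w \<in> SS n. xr v w \<in> SS n}"

lemma R_T: assumes "v \<in> SS n" "w \<in> R n v" shows "\<exists>k. 2 \<le> k \<and> k \<le> n \<and> v \<in> T k \<and> w \<in> T k \<and> w \<noteq> v"
proof -
  have w: "w \<in> SS n" "xr v w \<in> SS n" using assms(2) by (auto simp: R_def)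
  have "w \<noteq> v" using w(2) by auto
  then show ?thesis using tri_lemma[OF assms(1) w(1) _ w(2)] by blast
qed

lemma R_uu: assumes "1 \<le> j" "j \<le> n"
  shows "R n (uu j) \<subseteq> (if j = 1 then {uu 2, ee 2} else {uu (j-1), ee j, uu (j+1), ee (j+1)})"
proof
  fix w assume "w \<in> R n (uu j)"
  then obtain k where k: "2 \<le> k" "k \<le> n" "uu j \<in> T k" "w \<in> T k" "w \<noteq> uu j"
    using R_T[of "uu j" n w] assms by auto
  have "j = k - 1 \<or> j = k" using k(1,3) by (auto simp: T_def)
  then show "w \<in> (if j = 1 then {uu 2, ee 2} else {uu (j-1), ee j, uu (j+1), ee (j+1)})"
    using k assms by (auto simp: T_def)
qed

lemma R_uun: assumes "1 \<le> n" shows "R n (uu n) \<subseteq> {uu (n-1), ee n}"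
proof
  fix w assume "w \<in> R n (uu n)"
  then obtain k where k: "2 \<le> k" "k \<le> n" "uu n \<in> T k" "w \<in> T k" "w \<noteq> uu n"
    using R_T[of "uu n" n w] assms by auto
  have "n = k - 1 \<or> n = k" using k(1,3) by (auto simp: T_def)
  then show "w \<in> {uu (n-1), ee n}" using k by (auto simp: T_def)
qed

lemma R_ee: assumes "2 \<le> j" "j \<le> n" shows "R n (ee j) \<subseteq> {uu (j-1), uu j}"
proof
  fix w assume "w \<in> R n (ee j)"
  then obtain k where k: "2 \<le> k" "k \<le> n" "ee j \<in> T k" "w \<in> T k" "w \<noteq> ee j"
    using R_T[of "ee j" n w] assms by auto
  have "j = k" using k(1,3) assms by (auto simp: T_def)
  then show "w \<in> {uu (j-1), uu j}" using k by (auto simp: T_def)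
qed

lemma card4: "card {a,b,c,d} \<le> 4" by (simp add: card_insert_if)
lemma card2: "card {a,b} \<le> 2" by (simp add: card_insert_if)

lemma finite_R[simp]: "finite (R n v)" by (simp add: R_def)

lemma card_R: assumes "v \<in> SS n" shows "card (R n v) \<le> 4"
proof -
  from SS_cases[OF assms] show ?thesis
  proof (elim disjE exE conjE)
    fix j assume j: "1 \<le> j" "j \<le> n" "v = uu j"
    show ?thesis
    proof (cases "j = 1")
      case True
      then have "card (R n v) \<le> card {uu 2, ee 2}" using R_uu[OF j(1,2)] j(3) by (intro card_mono) auto
      then show ?thesis using card2[of "uu 2" "ee 2"] by linarith
    next
      case False
      then have "card (R n v) \<le> card {uu (j-1), ee j, uu (j+1), ee (j+1)}" using R_uu[OF j(1,2)] j(3) by (intro card_mono) auto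
      then show ?thesis using card4[of "uu (j-1)" "ee j" "uu (j+1)" "ee (j+1)"] by linarith
    qed
  next
    fix j assume j: "2 \<le> j" "j \<le> n" "v = ee j"
    have "card (R n v) \<le> card {uu (j-1), uu j}" using R_ee[OF j(1,2)] j(3) by (intro card_mono) auto
    then show ?thesis using card2[of "uu (j-1)" "uu j"] by linarith
  qed
qed

lemma card_R_ee: assumes "2 \<le> j" "j \<le> n" shows "card (R n (ee j)) \<le> 2"
proof -
  have "card (R n (ee j)) \<le> card {uu (j-1), uu j}" using R_ee[OF assms] by (intro card_mono) auto
  then show ?thesis using card2[of "uu (j-1)" "uu j"] by linarith
qed

lemma card_R_uun: assumes "1 \<le> n" shows "card (R n (uu n)) \<le> 2"
proof -
  have "card (R n (uu n)) \<le> card {uu (n-1), ee n}" using R_uun[OF assms] by (intro card_mono) auto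
  then show ?thesis using card2[of "uu (n-1)" "ee n"] by linarith
qed



definition Cy :: "nat \<Rightarrow> (nat \<Rightarrow> bool) set" where "Cy k = {uu (k-1), ee k, ee (k+1), uu (k+1)}"

lemma C22: assumes p: "p \<in> SS n" and q: "q \<in> SS n" and r: "r \<in> SS n" and s: "s \<in> SS n"
  and "p 1" "q 1" "\<not> r 1" "\<not> s 1" "r \<noteq> s" and e: "xr p q = xr r s"
  shows "\<exists>m. 2 \<le> m \<and> m + 1 \<le> n \<and> p \<in> Cy m \<and> q \<in> Cy m \<and> r \<in> Cy m \<and> s \<in> Cy m"
proof -
  obtain i where i: "1 \<le> i" "i \<le> n" "p = uu i" using SS_T[OF p] assms by blast
  obtain j where j: "1 \<le> j" "j \<le> n" "q = uu j" using SS_T[OF q] assms by blast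
  obtain k where k: "2 \<le> k" "k \<le> n" "r = ee k" using SS_F[OF r] assms by blast
  obtain l where l: "2 \<le> l" "l \<le> n" "s = ee l" using SS_F[OF s] assms by blast
  have "k \<noteq> l" using assms k l by auto
  from UUEE[OF e[unfolded i(3) j(3) k(3) l(3)] i(1) j(1) this]
  have "(j = i+2 \<and> ((k=i+1 \<and> l=i+2) \<or> (k=i+2 \<and> l=i+1))) \<or> (i = j+2 \<and> ((k=j+1 \<and> l=j+2) \<or> (k=j+2 \<and> l=j+1)))" .
  then show ?thesis
  proof (elim disjE conjE)
    assume "j = i+2" "k=i+1" "l=i+2" then show ?thesis using i j k l by (intro exI[of _ "i+1"]) (auto simp: Cy_def)
  next
    assume "j = i+2" "k=i+2" "l=i+1" then show ?thesis using i j k l by (intro exI[of _ "i+1"]) (auto simp: Cy_def)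
  next
    assume "i = j+2" "k=j+1" "l=j+2" then show ?thesis using i j k l by (intro exI[of _ "j+1"]) (auto simp: Cy_def)
  next
    assume "i = j+2" "k=j+2" "l=j+1" then show ?thesis using i j k l by (intro exI[of _ "j+1"]) (auto simp: Cy_def)
  qed
qed

lemma cyc_lemma: assumes ma: "a \<in> SS n" and mb: "b \<in> SS n" and mc: "c \<in> SS n" and md: "d \<in> SS n"
  and ab: "a \<noteq> b" and ac: "a \<noteq> c" and ad: "a \<noteq> d" and bc: "b \<noteq> c" and bd: "b \<noteq> d" and cd: "c \<noteq> d"
  and e1: "xr a b = xr c d"
  shows "\<exists>m. 2 \<le> m \<and> m + 1 \<le> n \<and> a \<in> Cy m \<and> b \<in> Cy m \<and> c \<in> Cy m \<and> d \<in> Cy m"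
proof -
  have e1': "xr c d = xr a b" using e1 by simp
  have e2: "xr a c = xr b d" using e1 by (auto simp: xr_def fun_eq_iff)
  have e2': "xr b d = xr a c" using e2 by simp
  have e3: "xr a d = xr b c" using e1 by (auto simp: xr_def fun_eq_iff)
  have e3': "xr b c = xr a d" using e3 by simp
  have p1: "(a 1 \<noteq> b 1) = (c 1 \<noteq> d 1)" using fun_cong[OF e1, of 1] by (simp add: xr_def)
  show ?thesis
  proof (cases "a 1")
    case True
    note ta = this
    show ?thesis
    proof (cases "b 1")
      case True
      note tb = this
      show ?thesis
      proof (cases "c 1")
        case True
        note tc = this
        show ?thesis
        proof (cases "d 1")
          case True
          note td = this
          obtain ia where ia: "a = uu ia" using SS_T[OF ma ta] by blast
          obtain jb where jb: "b = uu jb" using SS_T[OF mb tb] by blast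
          obtain kc where kc: "c = uu kc" using SS_T[OF mc tc] by blast
          obtain ld where ld: "d = uu ld" using SS_T[OF md td] by blast
          show ?thesis using UUUU[of ia jb kc ld] e1 ab ac ad bc bd cd ia jb kc ld by auto
        next
          case False
          note fd = this
          show ?thesis using p1 ta tb tc fd by simp
        qed
      next
        case False
        note fc = this
        show ?thesis
        proof (cases "d 1")
          case True
          note td = this
          show ?thesis using p1 ta tb fc td by simp
        next
          case False
          note fd = this
          from C22[OF ma mb mc md ta tb fc fd cd e1] show ?thesis by blast
        qed
      qed
    next
      case False
      note fb = this
      show ?thesis
      proof (cases "c 1")
        case True
        note tc = this
        show ?thesis
        proof (cases "d 1")
          case True
          note td = this
          show ?thesis using p1 ta fb tc td by simp
        next
          case False
          note fd = this
          from C22[OF ma mc mb md ta tc fb fd bd e2] show ?thesis by blast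
        qed
      next
        case False
        note fc = this
        show ?thesis
        proof (cases "d 1")
          case True
          note td = this
          from C22[OF ma md mb mc ta td fb fc bc e3] show ?thesis by blast
        next
          case False
          note fd = this
          show ?thesis using p1 ta fb fc fd by simp
        qed
      qed
    qed
  next
    case False
    note fa = this
    show ?thesis
    proof (cases "b 1")
      case True
      note tb = this
      show ?thesis
      proof (cases "c 1")
        case True
        note tc = this
        show ?thesis
        proof (cases "d 1")
          case True
          note td = this
          show ?thesis using p1 fa tb tc td by simp
        next
          case False
          note fd = this
          from C22[OF mb mc ma md tb tc fa fd ad e3'] show ?thesis by blast
        qed
      next
        case False
        note fc = this
        show ?thesis
        proof (cases "d 1")
          case True
          note td = this
          from C22[OF mb md ma mc tb td fa fc ac e2'] show ?thesis by blast
        next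
          case False
          note fd = this
          show ?thesis using p1 fa tb fc fd by simp
        qed
      qed
    next
      case False
      note fb = this
      show ?thesis
      proof (cases "c 1")
        case True
        note tc = this
        show ?thesis
        proof (cases "d 1")
          case True
          note td = this
          from C22[OF mc md ma mb tc td fa fb ab e1'] show ?thesis by blast
        next
          case False
          note fd = this
          show ?thesis using p1 fa fb tc fd by simp
        qed
      next
        case False
        note fc = this
        show ?thesis
        proof (cases "d 1")
          case True
          note td = this
          show ?thesis using p1 fa fb fc td by simp
        next
          case False
          note fd = this
          obtain ia where ia: "a = ee ia" using SS_F[OF ma fa] by blast
          obtain jb where jb: "b = ee jb" using SS_F[OF mb fb] by blast
          obtain kc where kc: "c = ee kc" using SS_F[OF mc fc] by blast
          obtain ld where ld: "d = ee ld" using SS_F[OF md fd] by blast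
          show ?thesis using EEEE[of ia jb kc ld] e1 ab ac ad bc bd cd ia jb kc ld by auto
        qed
      qed
    qed
  qed
qed



lemma Cy_share: assumes "s \<noteq> t" "s \<in> Cy m" "t \<in> Cy m" "s \<in> Cy m'" "t \<in> Cy m'" "2 \<le> m" "2 \<le> m'"
  shows "m = m'"
  using assms by (auto simp: Cy_def)

lemma Qsub: assumes s: "s \<in> SS n" and t: "t \<in> SS n" and st: "s \<noteq> t" and w: "w \<in> R n (xr s t)"
  shows "w = s \<or> w = t \<or> (\<exists>m. 2 \<le> m \<and> m + 1 \<le> n \<and> s \<in> Cy m \<and> t \<in> Cy m \<and> w \<in> Cy m)"
proof (cases "w = s \<or> w = t")
  case False
  define c where "c = xr (xr s t) w"
  have ws: "w \<in> SS n" and cs: "c \<in> SS n" using w by (auto simp: R_def c_def)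
  have cne: "c \<noteq> s" "c \<noteq> t" "w \<noteq> c" using False st
    by (auto simp: c_def xr_def fun_eq_iff)
  have e: "xr s t = xr w c" unfolding c_def by (metis xr_cancel xr_comm)
  from cyc_lemma[OF s t ws cs st _ _ _ _ cne(3) e] False cne
  show ?thesis by blast
qed blast

lemma card_Cy: "card (Cy m) \<le> 4" unfolding Cy_def by (rule card4)

lemma card_Q: assumes s: "s \<in> SS n" and t: "t \<in> SS n" and st: "s \<noteq> t"
  shows "card (R n (xr s t)) \<le> 4"
proof (cases "\<exists>m. 2 \<le> m \<and> s \<in> Cy m \<and> t \<in> Cy m")
  case True
  then obtain m where m: "2 \<le> m" "s \<in> Cy m" "t \<in> Cy m" by blast
  have "R n (xr s t) \<subseteq> Cy m"
  proof
    fix w assume "w \<in> R n (xr s t)"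
    from Qsub[OF s t st this] show "w \<in> Cy m"
    proof (elim disjE exE conjE)
      fix m' assume h: "2 \<le> m'" "m' + 1 \<le> n" "s \<in> Cy m'" "t \<in> Cy m'" "w \<in> Cy m'"
      have "m = m'" using Cy_share[OF st m(2,3) h(3,4) m(1) h(1)] .
      then show ?thesis using h(5) by simp
    qed (use m in simp_all)
  qed
  then have "card (R n (xr s t)) \<le> card (Cy m)" by (intro card_mono) (auto simp: Cy_def)
  then show ?thesis using card_Cy[of m] by linarith
next
  case False
  have "R n (xr s t) \<subseteq> {s, t}"
  proof
    fix w assume "w \<in> R n (xr s t)"
    from Qsub[OF s t st this] show "w \<in> {s,t}" using False by auto
  qed
  then have "card (R n (xr s t)) \<le> card {s,t}" by (intro card_mono) auto
  then show ?thesis using card2[of s t] by linarith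
qed

lemma card_Q_uu: assumes i: "1 \<le> i" "i \<le> n" and j: "1 \<le> j" "j \<le> n" and ij: "i \<noteq> j"
  and nd: "i + 2 \<noteq> j" "j + 2 \<noteq> i"
  shows "card (R n (xr (uu i) (uu j))) \<le> 2"
proof -
  have no: "\<not> (\<exists>m. 2 \<le> m \<and> uu i \<in> Cy m \<and> uu j \<in> Cy m)"
    using ij nd by (auto simp: Cy_def)
  have "R n (xr (uu i) (uu j)) \<subseteq> {uu i, uu j}"
  proof
    fix w assume "w \<in> R n (xr (uu i) (uu j))"
    from Qsub[of "uu i" n "uu j", OF _ _ _ this] show "w \<in> {uu i, uu j}" using no i j ij by auto
  qed
  then have "card (R n (xr (uu i) (uu j))) \<le> card {uu i, uu j}" by (intro card_mono) auto
  then show ?thesis using card2[of "uu i" "uu j"] by linarith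
qed



lemma le1_sub: "X \<subseteq> A \<Longrightarrow> Y \<subseteq> B \<Longrightarrow> (\<forall>x\<in>A. \<forall>y\<in>A. x\<in>B \<longrightarrow> y\<in>B \<longrightarrow> x=y) \<Longrightarrow> \<forall>x\<in>X\<inter>Y. \<forall>y\<in>X\<inter>Y. x=y"
  by blast

lemma tri_le1: assumes s: "s \<in> SS n" and t: "t \<in> SS n" and st: "s \<noteq> t"
  shows "card (R n s \<inter> R n t) \<le> 1"
proof -
  have fin: "finite (R n s \<inter> R n t)" by simp
  have "\<forall>x\<in>R n s \<inter> R n t. \<forall>y\<in>R n s \<inter> R n t. x = y"
    using SS_cases[OF s] SS_cases[OF t]
  proof (elim disjE exE conjE)
    fix i j assume i: "1 \<le> i" "i \<le> n" "s = uu i" and j: "1 \<le> j" "j \<le> n" "t = uu j"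
    have ij: "i \<noteq> j" using i j st by auto
    show ?thesis
    proof (cases "i = 1")
      case True
      then have j1: "j \<noteq> 1" using ij by simp
      show ?thesis using R_uu[OF i(1,2)] R_uu[OF j(1,2)] i j True j1
        by (intro le1_sub[of _ "{uu 2, ee 2}" _ "{uu (j-1), ee j, uu (j+1), ee (j+1)}"]) auto
    next
      case False
      show ?thesis
      proof (cases "j = 1")
        case True
        show ?thesis using R_uu[OF i(1,2)] R_uu[OF j(1,2)] i j True False
          by (intro le1_sub[of _ "{uu (i-1), ee i, uu (i+1), ee (i+1)}" _ "{uu 2, ee 2}"]) auto
      next
        case False2: False
        show ?thesis using R_uu[OF i(1,2)] R_uu[OF j(1,2)] i j False False2 ij
          by (intro le1_sub[of _ "{uu (i-1), ee i, uu (i+1), ee (i+1)}" _ "{uu (j-1), ee j, uu (j+1), ee (j+1)}"]) auto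
      qed
    qed
  next
    fix i j assume i: "1 \<le> i" "i \<le> n" "s = uu i" and j: "2 \<le> j" "j \<le> n" "t = ee j"
    show ?thesis
    proof (cases "i = 1")
      case True
      show ?thesis using R_uu[OF i(1,2)] R_ee[OF j(1,2)] i j True
        by (intro le1_sub[of _ "{uu 2, ee 2}" _ "{uu (j-1), uu j}"]) auto
    next
      case False
      show ?thesis using R_uu[OF i(1,2)] R_ee[OF j(1,2)] i j False
        by (intro le1_sub[of _ "{uu (i-1), ee i, uu (i+1), ee (i+1)}" _ "{uu (j-1), uu j}"]) auto
    qed
  next
    fix i j assume i: "2 \<le> i" "i \<le> n" "s = ee i" and j: "1 \<le> j" "j \<le> n" "t = uu j"
    show ?thesis
    proof (cases "j = 1")
      case True
      show ?thesis using R_ee[OF i(1,2)] R_uu[OF j(1,2)] i j True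
        by (intro le1_sub[of _ "{uu (i-1), uu i}" _ "{uu 2, ee 2}"]) auto
    next
      case False
      show ?thesis using R_ee[OF i(1,2)] R_uu[OF j(1,2)] i j False
        by (intro le1_sub[of _ "{uu (i-1), uu i}" _ "{uu (j-1), ee j, uu (j+1), ee (j+1)}"]) auto
    qed
  next
    fix i j assume i: "2 \<le> i" "i \<le> n" "s = ee i" and j: "2 \<le> j" "j \<le> n" "t = ee j"
    have ij: "i \<noteq> j" using i j st by auto
    show ?thesis using R_ee[OF i(1,2)] R_ee[OF j(1,2)] i j ij
        by (intro le1_sub[of _ "{uu (i-1), uu i}" _ "{uu (j-1), uu j}"]) auto
  qed
  then show ?thesis using card_le_Suc0_iff_eq[OF fin] by simp
qed



lemma xr_cancel3: "xr t (xr s t) = s" by (auto simp: xr_def fun_eq_iff)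

lemma adj_sum: assumes s: "s \<in> SS n" and t: "t \<in> SS n" and st: "s \<noteq> t" and w: "xr s t \<in> SS n"
  shows "card (R n s) + card (R n t) + card (R n (xr s t)) \<le> 10"
proof -
  obtain k where k: "2 \<le> k" "k \<le> n" "s \<in> T k" "t \<in> T k" "xr s t \<in> T k"
    using tri_lemma[OF s t st w] by blast
  have ne: "xr s t \<noteq> s" "xr s t \<noteq> t" using s t by auto
  have "s = ee k \<or> t = ee k \<or> xr s t = ee k" using k(3-5) ne st by (auto simp: T_def)
  moreover have "card (R n (ee k)) \<le> 2" using card_R_ee[OF k(1,2)] .
  ultimately show ?thesis using card_R[OF s] card_R[OF t] card_R[OF w] by auto
qed

lemma xr_uu_suc1: "xr (uu i) (uu (Suc i)) = ee (Suc i)" by (auto simp: xr_def uu_def ee_def fun_eq_iff)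
lemma xr_uu_suc2: "xr (uu (Suc (Suc i))) (uu (Suc i)) = ee (Suc (Suc i))" by (auto simp: xr_def uu_def ee_def fun_eq_iff)

lemma key_bound: assumes n: "n \<ge> 5" and s: "s \<in> SS n" and t: "t \<in> SS n" and st: "s \<noteq> t"
  shows "card (R n s) + card (R n t) + card (R n (xr s t)) \<le> 11 + card (R n s \<inter> R n t)
    \<and> (t = uu n \<longrightarrow> card (R n s) + card (R n t) + card (R n (xr s t)) \<le> 9 + card (R n s \<inter> R n t))"
proof (cases "xr s t \<in> SS n")
  case True
  have "xr s t \<in> R n s \<inter> R n t" using True s t by (auto simp: R_def xr_cancel3)
  then have "card (R n s \<inter> R n t) \<ge> 1"
    by (metis One_nat_def Suc_leI card_gt_0_iff empty_iff finite_Int finite_R)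
  then show ?thesis using adj_sum[OF s t st True] by linarith
next
  case False
  have rs: "card (R n s) \<le> 4" using card_R[OF s] .
  have rt: "card (R n t) \<le> 4" using card_R[OF t] .
  have q: "card (R n (xr s t)) \<le> 4" using card_Q[OF s t st] .
  have rtn: "t = uu n \<longrightarrow> card (R n t) \<le> 2" using card_R_uun n by auto
  show ?thesis
  proof (cases "s 1 \<and> t 1")
    case True
    obtain i where i: "1 \<le> i" "i \<le> n" "s = uu i" using SS_T[OF s] True by blast
    obtain j where j: "1 \<le> j" "j \<le> n" "t = uu j" using SS_T[OF t] True by blast
    have ij: "i \<noteq> j" using st i j by auto
    show ?thesis
    proof (cases "i + 2 = j \<or> j + 2 = i")
      case True
      have "\<exists>m. m + 2 \<le> n \<and> ((i = m \<and> j = m+2) \<or> (j = m \<and> i = m + 2))" using True i j by auto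
      then obtain m where m: "m + 2 \<le> n" "(i = m \<and> j = m+2) \<or> (j = m \<and> i = m + 2)" by blast
      have "uu (Suc m) \<in> R n s \<inter> R n t"
        using m i j xr_uu_suc1[of m] xr_uu_suc2[of m] by (auto simp: R_def xr_comm)
      then have "card (R n s \<inter> R n t) \<ge> 1"
        by (metis One_nat_def Suc_leI card_gt_0_iff empty_iff finite_Int finite_R)
      then show ?thesis using rs rt q rtn by linarith
    next
      case False
      have "card (R n (xr s t)) \<le> 2" using card_Q_uu[OF i(1,2) j(1,2) ij] False i(3) j(3) by auto
      then show ?thesis using rs rt rtn by linarith
    qed
  next
    case False
    then have "(\<exists>j. 2 \<le> j \<and> j \<le> n \<and> s = ee j) \<or> (\<exists>j. 2 \<le> j \<and> j \<le> n \<and> t = ee j)"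
      using SS_F[OF s] SS_F[OF t] by blast
    then show ?thesis
    proof (elim disjE exE conjE)
      fix j assume j: "2 \<le> j" "j \<le> n" "s = ee j"
      have "card (R n s) \<le> 2" using card_R_ee[OF j(1,2)] j(3) by simp
      then show ?thesis using rt q rtn by linarith
    next
      fix j assume j: "2 \<le> j" "j \<le> n" "t = ee j"
      have "card (R n t) \<le> 2" using card_R_ee[OF j(1,2)] j(3) by simp
      moreover have "t \<noteq> uu n" using j n by auto
      ultimately show ?thesis using rs q by linarith
    qed
  qed
qed



lemma incl_excl3: assumes "finite A" "finite B" "finite C"
  shows "card (A \<union> B \<union> C) + card (A \<inter> B) + card (A \<inter> C) + card (B \<inter> C) = card A + card B + card C + card (A \<inter> B \<inter> C)"
proof -
  have 1: "card A + card B = card (A \<union> B) + card (A \<inter> B)" by (rule card_Un_Int[OF assms(1,2)])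
  have 2: "card (A \<union> B) + card C = card (A \<union> B \<union> C) + card ((A \<union> B) \<inter> C)" using card_Un_Int[of "A \<union> B" C] assms by simp
  have e: "(A \<union> B) \<inter> C = (A \<inter> C) \<union> (B \<inter> C)" by blast
  have e2: "(A \<inter> C) \<inter> (B \<inter> C) = A \<inter> B \<inter> C" by blast
  have 3: "card (A \<inter> C) + card (B \<inter> C) = card ((A \<inter> C) \<union> (B \<inter> C)) + card (A \<inter> B \<inter> C)"
    using card_Un_Int[of "A \<inter> C" "B \<inter> C"] assms e2 by simp
  show ?thesis using 1 2 3 e by simp
qed

lemma inj_xr: "inj (xr a)" by (simp add: inj_def)

lemma reduced: assumes n: "n \<ge> 5" and s: "s \<in> SS n" and t: "t \<in> SS n" and st: "s \<noteq> t"
  shows "card ((SS n \<union> xr s ` SS n \<union> xr t ` SS n) - {s, z0, t}) \<ge> 6 * n - 17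
    \<and> card (SS n \<inter> xr s ` SS n \<inter> xr t ` SS n) \<le> 1
    \<and> (t = uu n \<longrightarrow> card ((SS n \<union> xr s ` SS n \<union> xr t ` SS n) - {s, z0, t}) \<ge> 6 * n - 15)"
proof -
  let ?A = "SS n" let ?B = "xr s ` SS n" let ?C = "xr t ` SS n"
  have cA: "card ?A = 2*n - 1" using card_SS n by simp
  have cB: "card ?B = card ?A" by (rule card_image) (meson inj_xr inj_on_subset subset_UNIV)
  have cC: "card ?C = card ?A" by (rule card_image) (meson inj_xr inj_on_subset subset_UNIV)
  have AB: "?A \<inter> ?B = R n s"
  proof (intro set_eqI iffI)
    fix x assume "x \<in> ?A \<inter> ?B" then show "x \<in> R n s" by (auto simp: R_def)
  next
    fix x assume "x \<in> R n s" then show "x \<in> ?A \<inter> ?B" by (auto simp: R_def image_iff intro!: bexI[of _ "xr s x"])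
  qed
  have AC: "?A \<inter> ?C = R n t"
  proof (intro set_eqI iffI)
    fix x assume "x \<in> ?A \<inter> ?C" then show "x \<in> R n t" by (auto simp: R_def)
  next
    fix x assume "x \<in> R n t" then show "x \<in> ?A \<inter> ?C" by (auto simp: R_def image_iff intro!: bexI[of _ "xr t x"])
  qed
  have BC: "?B \<inter> ?C = xr s ` R n (xr s t)"
  proof (intro set_eqI iffI)
    fix x assume x: "x \<in> ?B \<inter> ?C"
    then obtain a b where a: "a \<in> SS n" "x = xr s a" and b: "b \<in> SS n" "x = xr t b" by auto
    have "xr (xr s t) a = b" using a b by (metis xr_assoc xr_cancel)
    then have "a \<in> R n (xr s t)" using a b by (auto simp: R_def)
    then show "x \<in> xr s ` R n (xr s t)" using a by auto
  next
    fix x assume "x \<in> xr s ` R n (xr s t)"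
    then obtain a where a: "a \<in> SS n" "xr (xr s t) a \<in> SS n" "x = xr s a" by (auto simp: R_def)
    have "x = xr t (xr (xr s t) a)" using a(3) by (metis xr_assoc xr_cancel xr_comm)
    then have "x \<in> ?C" using a(2) by blast
    moreover have "x \<in> ?B" using a(1,3) by blast
    ultimately show "x \<in> ?B \<inter> ?C" by blast
  qed
  have ABC: "?A \<inter> ?B \<inter> ?C = R n s \<inter> R n t" using AB AC by blast
  have cBC: "card (?B \<inter> ?C) = card (R n (xr s t))" unfolding BC
    by (rule card_image) (meson inj_xr inj_on_subset subset_UNIV)
  have ie: "card (?A \<union> ?B \<union> ?C) + card (R n s) + card (R n t) + card (R n (xr s t))
      = 3 * (2*n - 1) + card (R n s \<inter> R n t)"
    using incl_excl3[of ?A ?B ?C] AB AC cBC ABC cA cB cC by simp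
  have sub: "{s, z0, t} \<subseteq> ?A \<union> ?B \<union> ?C" using s t by (auto simp: image_iff intro!: bexI[of _ s])
  have sz: "s \<noteq> z0" "t \<noteq> z0" using s t by auto
  have c3: "card {s, z0, t} = 3" using sz st by simp
  have cd: "card ((?A \<union> ?B \<union> ?C) - {s, z0, t}) = card (?A \<union> ?B \<union> ?C) - 3"
    using card_Diff_subset[OF _ sub] c3 by simp
  have kb: "card (R n s) + card (R n t) + card (R n (xr s t)) \<le> 11 + card (R n s \<inter> R n t)
    \<and> (t = uu n \<longrightarrow> card (R n s) + card (R n t) + card (R n (xr s t)) \<le> 9 + card (R n s \<inter> R n t))"
    using key_bound[OF n s t st] .
  have t1: "card (R n s \<inter> R n t) \<le> 1" using tri_le1[OF s t st] .
  have u3: "card (?A \<union> ?B \<union> ?C) \<ge> 3" using card_mono[OF _ sub] c3 by simp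
  obtain u rs rt q tr where vars: "u = card (?A \<union> ?B \<union> ?C)" "rs = card (R n s)" "rt = card (R n t)"
    "q = card (R n (xr s t))" "tr = card (R n s \<inter> R n t)" by blast
  have i2: "u + rs + rt + q = 3 * (2*n - 1) + tr" using ie vars by simp
  have k2: "rs + rt + q \<le> 11 + tr" "t = uu n \<longrightarrow> rs + rt + q \<le> 9 + tr"
    using conjunct1[OF kb] conjunct2[OF kb] unfolding vars by blast+
  have g1: "6 * n - 17 \<le> u - 3" using i2 k2(1) n u3 vars by linarith
  have g3: "t = uu n \<longrightarrow> 6 * n - 15 \<le> u - 3" using i2 k2(2) n u3 vars by linarith
  have g2: "card (?A \<inter> ?B \<inter> ?C) \<le> 1" using ABC t1 by simp
  have cd': "card ((?A \<union> ?B \<union> ?C) - {s, z0, t}) = u - 3" using cd vars by simp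
  show ?thesis unfolding cd' using g1 g2 g3 by blast
qed



lemma fb: "flip_bit x i = xr x (ee i)" by (auto simp: flip_bit_def xr_def ee_def fun_eq_iff)
lemma fu: "flip_upto x i = xr x (uu i)" by (auto simp: flip_upto_def xr_def uu_def fun_eq_iff)

lemma verts_xr: assumes X: "X \<in> AQ_verts n" and w: "w \<in> SS n" shows "xr X w \<in> AQ_verts n"
  using SS_cases[OF w]
proof (elim disjE exE conjE)
  fix i assume "1 \<le> i" "i \<le> n" "w = uu i"
  then show ?thesis using X by (auto simp: AQ_verts_def xr_def uu_def)
next
  fix i assume "2 \<le> i" "i \<le> n" "w = ee i"
  then show ?thesis using X by (auto simp: AQ_verts_def xr_def ee_def)
qed

lemma nbr_eq: assumes X: "X \<in> AQ_verts n" shows "AQ_nbr n X = xr X ` SS n"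
proof (intro set_eqI iffI)
  fix y assume "y \<in> AQ_nbr n X"
  then have "(\<exists>i\<in>{1..n}. y = flip_bit X i) \<or> (\<exists>i\<in>{2..n}. y = flip_upto X i)"
    by (auto simp: AQ_nbr_def AQ_adj_def)
  then show "y \<in> xr X ` SS n"
  proof (elim disjE bexE)
    fix i assume "i \<in> {1..n}" "y = flip_bit X i"
    then show ?thesis by (auto simp: fb image_iff intro!: bexI[of _ "ee i"])
  next
    fix i assume "i \<in> {2..n}" "y = flip_upto X i"
    then show ?thesis by (auto simp: fu image_iff intro!: bexI[of _ "uu i"])
  qed
next
  fix y assume "y \<in> xr X ` SS n"
  then obtain w where w: "w \<in> SS n" "y = xr X w" by auto
  have yv: "y \<in> AQ_verts n" using verts_xr[OF X w(1)] w(2) by simp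
  have ne: "X \<noteq> y" using w(1) w(2) xr_eq_self1[of X w] z0_notin[of n] by metis
  have "(\<exists>i\<in>{1..n}. y = flip_bit X i) \<or> (\<exists>i\<in>{2..n}. y = flip_upto X i)"
    using SS_cases[OF w(1)]
  proof (elim disjE exE conjE)
    fix i assume i: "1 \<le> i" "i \<le> n" "w = uu i"
    show ?thesis
    proof (cases "i = 1")
      case True
      then have "y = flip_bit X 1" using i w by (simp add: fb)
      then show ?thesis using i by auto
    next
      case False
      then have "y = flip_upto X i" using i w by (simp add: fu)
      then show ?thesis using i False by auto
    qed
  next
    fix i assume i: "2 \<le> i" "i \<le> n" "w = ee i"
    then have "y = flip_bit X i" using w by (simp add: fb)
    then show ?thesis using i by auto
  qed
  then show "y \<in> AQ_nbr n X" using X yv ne by (auto simp: AQ_nbr_def AQ_adj_def)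
qed

theorem lemma2p8:
  fixes n :: nat and X Y Z :: "nat \<Rightarrow> bool"
  assumes "n \<ge> 5"
    and "X \<in> AQ_verts n" and "Y \<in> AQ_verts n" and "Z \<in> AQ_verts n"
    and "Y \<noteq> Z" and "AQ_adj n X Y" and "AQ_adj n X Z"
  shows "card (AQ_nbr_set n {Y, X, Z}) \<ge> 6 * n - 17
    \<and> card (AQ_nbr n X \<inter> AQ_nbr n Y \<inter> AQ_nbr n Z) \<le> 1
    \<and> (Z = flip_upto X n \<longrightarrow> card (AQ_nbr_set n {Y, X, Z}) \<ge> 6 * n - 15)"
proof -
  have NX: "AQ_nbr n X = xr X ` SS n" using nbr_eq assms(2) by simp
  have "Y \<in> AQ_nbr n X" using assms(6) by (simp add: AQ_nbr_def)
  then obtain s where s: "s \<in> SS n" "Y = xr X s" using NX by auto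
  have "Z \<in> AQ_nbr n X" using assms(7) by (simp add: AQ_nbr_def)
  then obtain t where t: "t \<in> SS n" "Z = xr X t" using NX by auto
  have st: "s \<noteq> t" using s t assms(5) by auto
  have img: "xr (xr X a) ` SS n = xr X ` (xr a ` SS n)" for a
    by (simp add: image_image xr_assoc)
  have NY: "AQ_nbr n Y = xr X ` (xr s ` SS n)" using nbr_eq[OF assms(3)] s(2) img by simp
  have NZ: "AQ_nbr n Z = xr X ` (xr t ` SS n)" using nbr_eq[OF assms(4)] t(2) img by simp
  have injX: "inj (xr X)" by (rule inj_xr)
  let ?U = "SS n \<union> xr s ` SS n \<union> xr t ` SS n"
  have set3: "{Y, X, Z} = xr X ` {s, z0, t}" using s t by simp
  have NS: "AQ_nbr_set n {Y, X, Z} = xr X ` (?U - {s, z0, t})"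
  proof -
    have "AQ_nbr_set n {Y, X, Z} = (AQ_nbr n Y \<union> AQ_nbr n X \<union> AQ_nbr n Z) - {Y, X, Z}"
      by (auto simp: AQ_nbr_set_def)
    also have "\<dots> = xr X ` ?U - xr X ` {s, z0, t}" using NX NY NZ set3 by (simp add: image_Un Un_ac)
    also have "\<dots> = xr X ` (?U - {s, z0, t})" by (rule image_set_diff[OF injX, symmetric])
    finally show ?thesis .
  qed
  have cNS: "card (AQ_nbr_set n {Y, X, Z}) = card (?U - {s, z0, t})"
    unfolding NS by (rule card_image) (meson injX inj_on_subset subset_UNIV)
  have NT: "AQ_nbr n X \<inter> AQ_nbr n Y \<inter> AQ_nbr n Z = xr X ` (SS n \<inter> xr s ` SS n \<inter> xr t ` SS n)"
    using NX NY NZ by (simp add: image_Int[OF injX])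
  have cNT: "card (AQ_nbr n X \<inter> AQ_nbr n Y \<inter> AQ_nbr n Z) = card (SS n \<inter> xr s ` SS n \<inter> xr t ` SS n)"
    unfolding NT by (rule card_image) (meson injX inj_on_subset subset_UNIV)
  have tn: "Z = flip_upto X n \<longrightarrow> t = uu n" using t(2) by (simp add: fu)
  have r: "card (?U - {s, z0, t}) \<ge> 6 * n - 17
    \<and> card (SS n \<inter> xr s ` SS n \<inter> xr t ` SS n) \<le> 1
    \<and> (t = uu n \<longrightarrow> card (?U - {s, z0, t}) \<ge> 6 * n - 15)"
    using reduced[OF assms(1) s(1) t(1) st] .
  show ?thesis using r tn unfolding cNS cNT by blast
qed


end
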